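(* On the noncommutative space $\mathbb{R}^4_\theta$ described in the context, the pair $(g,(\nabla,\sigma))$ is a Riemannian structure on the differential calculus $(\Omega^1_A,\mathrm{d})$.
   Context: Let $\theta\in\mathbb{R}$ and $R=(R^{ab})$ the $4\times4$ matrix (row $a$, column $b$) with rows $(1,e^{-i\theta},1,e^{i\theta})$, $(e^{i\theta},1,e^{-i\theta},1)$, $(1,e^{i\theta},1,e^{-i\theta})$, $(e^{-i\theta},1,e^{i\theta},1)$. $A=\mathbb{C}\langle z^1,\dots,z^4\rangle/(z^iz^j-R^{ji}z^jz^i)$; $\Omega^1_A=\bigoplus_iA\,\mathrm{d}z^i$ free left module with $\mathrm{d}z^i\,z^j=R^{ji}z^j\mathrm{d}z^i$, $\mathrm{d}z^i$ the image of $z^i$ under the Leibniz extension $\mathrm{d}$. With $P$ the matrix with rows $(0,0,1,0),(0,0,0,1),(1,0,0,0),(0,1,0,0)$, $(g_{ij})=\tfrac12P$, $(g^{ij})=2P$: metric $g=\sum g_{ij}\mathrm{d}z^i\otimes_A\mathrm{d}z^j$, inverse metric $g^{-1}(\mathrm{d}z^i\otimes_A\mathrm{d}z^j)=g^{ij}$ (left $A$-linear). $\nabla(\sum_ia_i\mathrm{d}z^i)=\sum_i\mathrm{d}a_i\otimes_A\mathrm{d}z^i$; $\sigma$ left $A$-linear with $\sigma(\mathrm{d}z^i\otimes_A\mathrm{d}z^j)=R^{ji}\mathrm{d}z^j\otimes_A\mathrm{d}z^i$. A Riemannian structure on $(\Omega^1_A,\mathrm{d})$ is a pair of a metric $g$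 (bimodule map $A\to\Omega^1_A\otimes_A\Omega^1_A$ with inverse bimodule map $g^{-1}$ satisfying $\sum_\alpha g^{-1}(\omega\otimes g^\alpha)g_\alpha=\omega=\sum_\alpha g^\alpha g^{-1}(g_\alpha\otimes\omega)$, $g(1)=\sum g^\alpha\otimes g_\alpha$) and a bimodule connection $(\nabla,\sigma)$ on $\Omega^1_A$ (left and right Leibniz rules $\nabla(a\omega)=a\nabla\omega+\mathrm{d}a\otimes\omega$, $\nabla(\omega a)=\nabla(\omega)a+\sigma(\omega\otimes\mathrm{d}a)$, $\sigma$ a bimodule isomorphism) such that $g^{-1}\circ\sigma=g^{-1}$ and $(\mathrm{id}\otimes_Ag^{-1})\circ\nabla^\otimes=\mathrm{d}\circ g^{-1}$ on $\Omega^1_A\otimes_A\Omega^1_A$, where $\nabla^\otimes(\omega\otimes\zeta)=\nabla(\omega)\otimes\zeta+(\sigma\otimes\mathrm{id})(\omega\otimes\nabla\zeta)$. *)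

theory Defs
  imports Complex_Main "HOL-Library.Function_Algebras"
begin

text \<open>The generators z^1..z^4 of the paper are indexed here by 0..3.
  Multi-indices are functions nat => nat vanishing outside 0..3; an element of A is
  the coefficient function (w.r.t. the ordered monomial basis
  z^m = (z^1)^(m 0) (z^2)^(m 1) (z^3)^(m 2) (z^4)^(m 3)).\<close>

type_synonym mi = "nat \<Rightarrow> nat"
type_synonym alg = "mi \<Rightarrow> complex"
type_synonym form1 = "nat \<Rightarrow> alg"
type_synonym form2 = "nat \<Rightarrow> nat \<Rightarrow> alg"
type_synonym form3 = "nat \<Rightarrow> nat \<Rightarrow> nat \<Rightarrow> alg"

text \<open>The matrix R (rows a, columns b, 0-based).\<close>
definition Rmat :: "real \<Rightarrow> nat \<Rightarrow> nat \<Rightarrow> complex" where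
  "Rmat \<theta> a b =
    [[1, exp (- \<i> * of_real \<theta>), 1, exp (\<i> * of_real \<theta>)],
     [exp (\<i> * of_real \<theta>), 1, exp (- \<i> * of_real \<theta>), 1],
     [1, exp (\<i> * of_real \<theta>), 1, exp (- \<i> * of_real \<theta>)],
     [exp (- \<i> * of_real \<theta>), 1, exp (\<i> * of_real \<theta>), 1]] ! a ! b"

definition Pmat :: "nat \<Rightarrow> nat \<Rightarrow> complex" where
  "Pmat a b = [[0,0,1,0],[0,0,0,1],[1,0,0,0],[0,1,0,0]] ! a ! b"

definition Alg :: "alg set" where
  "Alg = {f. finite {m. f m \<noteq> 0} \<and> (\<forall>m. f m \<noteq> 0 \<longrightarrow> (\<forall>k\<ge>4. m k = 0))}"

definition smulA :: "complex \<Rightarrow> alg \<Rightarrow> alg" where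
  "smulA c f = (\<lambda>m. c * f m)"

definition oneA :: alg where
  "oneA = (\<lambda>m. if m = (\<lambda>_. 0) then 1 else 0)"

definition cA :: "complex \<Rightarrow> alg" where
  "cA c = smulA c oneA"

definition zgen :: "nat \<Rightarrow> alg" where
  "zgen i = (\<lambda>m. if m = (\<lambda>k. if k = i then 1 else 0) then 1 else 0)"

text \<open>Reordering coefficient: z^m z^n = mcoef m n z^(m+n), obtained from
  z^i z^j = R^{ji} z^j z^i.\<close>
definition mcoef :: "real \<Rightarrow> mi \<Rightarrow> mi \<Rightarrow> complex" where
  "mcoef \<theta> m n = (\<Prod>i<4. \<Prod>j<i. Rmat \<theta> j i ^ (m i * n j))"

definition amul :: "real \<Rightarrow> alg \<Rightarrow> alg \<Rightarrow> alg" where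
  "amul \<theta> f g = (\<lambda>p. \<Sum>(m, n) \<in> {(m, n). f m \<noteq> 0 \<and> g n \<noteq> 0 \<and> (\<lambda>k. m k + n k) = p}.
                        mcoef \<theta> m n * f m * g n)"

text \<open>The automorphism b |-> lambda_i(b) with dz^i b = lambda_i(b) dz^i, determined by
  dz^i z^j = R^{ji} z^j dz^i.\<close>
definition twist :: "real \<Rightarrow> nat \<Rightarrow> alg \<Rightarrow> alg" where
  "twist \<theta> i b = (\<lambda>n. (\<Prod>j<4. Rmat \<theta> j i ^ n j) * b n)"

subsection \<open>Forms: free left modules on dz^i, dz^i (x) dz^j, dz^i (x) dz^j (x) dz^k\<close>

definition Form1 :: "form1 set" where
  "Form1 = {\<omega>. (\<forall>i<4. \<omega> i \<in> Alg) \<and> (\<forall>i. i \<ge> 4 \<longrightarrow> \<omega> i = 0)}"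

definition Form2 :: "form2 set" where
  "Form2 = {\<tau>. (\<forall>i<4. \<forall>j<4. \<tau> i j \<in> Alg) \<and> (\<forall>i j. (i \<ge> 4 \<or> j \<ge> 4) \<longrightarrow> \<tau> i j = 0)}"

definition dz :: "nat \<Rightarrow> form1" where
  "dz i = (\<lambda>k. if k = i then oneA else 0)"

definition lmul1 :: "real \<Rightarrow> alg \<Rightarrow> form1 \<Rightarrow> form1" where
  "lmul1 \<theta> a \<omega> = (\<lambda>i. amul \<theta> a (\<omega> i))"

definition rmul1 :: "real \<Rightarrow> form1 \<Rightarrow> alg \<Rightarrow> form1" where
  "rmul1 \<theta> \<omega> b = (\<lambda>i. amul \<theta> (\<omega> i) (twist \<theta> i b))"

definition lmul2 :: "real \<Rightarrow> alg \<Rightarrow> form2 \<Rightarrow> form2" where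
  "lmul2 \<theta> a \<tau> = (\<lambda>i j. amul \<theta> a (\<tau> i j))"

definition rmul2 :: "real \<Rightarrow> form2 \<Rightarrow> alg \<Rightarrow> form2" where
  "rmul2 \<theta> \<tau> b = (\<lambda>i j. amul \<theta> (\<tau> i j) (twist \<theta> i (twist \<theta> j b)))"

text \<open>omega (x)_A zeta, expressed in the basis dz^i (x) dz^j\<close>
definition tens :: "real \<Rightarrow> form1 \<Rightarrow> form1 \<Rightarrow> form2" where
  "tens \<theta> \<omega> \<zeta> = (\<lambda>i j. amul \<theta> (\<omega> i) (twist \<theta> i (\<zeta> j)))"

definition dz2 :: "real \<Rightarrow> nat \<Rightarrow> nat \<Rightarrow> form2" where
  "dz2 \<theta> i j = tens \<theta> (dz i) (dz j)"

text \<open>tau (x)_A zeta and omega (x)_A tau in the basis dz^i (x) dz^j (x) dz^k\<close>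
definition tens12 :: "real \<Rightarrow> form2 \<Rightarrow> form1 \<Rightarrow> form3" where
  "tens12 \<theta> \<tau> \<zeta> = (\<lambda>i j k. amul \<theta> (\<tau> i j) (twist \<theta> i (twist \<theta> j (\<zeta> k))))"

definition tens21 :: "real \<Rightarrow> form1 \<Rightarrow> form2 \<Rightarrow> form3" where
  "tens21 \<theta> \<omega> \<tau> = (\<lambda>i j k. amul \<theta> (\<omega> i) (twist \<theta> i (\<tau> j k)))"

definition is_leibniz_d :: "real \<Rightarrow> (alg \<Rightarrow> form1) \<Rightarrow> bool" where
  "is_leibniz_d \<theta> D \<longleftrightarrow>
     (\<forall>a\<in>Alg. D a \<in> Form1) \<and>
     (\<forall>a\<in>Alg. \<forall>b\<in>Alg. D (a + b) = D a + D b) \<and>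
     (\<forall>c. \<forall>a\<in>Alg. D (smulA c a) = (\<lambda>i. smulA c (D a i))) \<and>
     (\<forall>a\<in>Alg. \<forall>b\<in>Alg. D (amul \<theta> a b) = rmul1 \<theta> (D a) b + lmul1 \<theta> a (D b)) \<and>
     (\<forall>i<4. D (zgen i) = dz i)"

definition dA :: "real \<Rightarrow> alg \<Rightarrow> form1" where
  "dA \<theta> = (THE D. is_leibniz_d \<theta> D \<and> (\<forall>a. a \<notin> Alg \<longrightarrow> D a = 0))"

definition gmap :: "real \<Rightarrow> alg \<Rightarrow> form2" where
  "gmap \<theta> a = lmul2 \<theta> a (\<Sum>i<4. \<Sum>j<4. lmul2 \<theta> (cA (Pmat i j / 2)) (dz2 \<theta> i j))"

definition ginvC :: "real \<Rightarrow> form2 \<Rightarrow> alg" where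
  "ginvC \<theta> \<tau> = (\<Sum>i<4. \<Sum>j<4. amul \<theta> (\<tau> i j) (cA (2 * Pmat i j)))"

definition nablaC :: "real \<Rightarrow> form1 \<Rightarrow> form2" where
  "nablaC \<theta> \<omega> = (\<Sum>i<4. tens \<theta> (dA \<theta> (\<omega> i)) (dz i))"

definition sigmaC :: "real \<Rightarrow> form2 \<Rightarrow> form2" where
  "sigmaC \<theta> \<tau> = (\<Sum>i<4. \<Sum>j<4. lmul2 \<theta> (\<tau> i j) (lmul2 \<theta> (cA (Rmat \<theta> j i)) (dz2 \<theta> j i)))"

text \<open>sigma (x) id on Omega^1 (x) Omega^1 (x) Omega^1, using
  T = sum_k (sum_ij T_ijk dz^i (x) dz^j) (x) dz^k.\<close>
definition sigma_id :: "real \<Rightarrow> (form2 \<Rightarrow> form2) \<Rightarrow> form3 \<Rightarrow> form3" where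
  "sigma_id \<theta> S T = (\<Sum>k<4. tens12 \<theta> (S (\<lambda>i j. if i < 4 \<and> j < 4 then T i j k else 0)) (dz k))"

text \<open>id (x) g^{-1} on Omega^1 (x) Omega^1 (x) Omega^1, using
  T = sum_ijk (T_ijk dz^i) (x) (dz^j (x) dz^k).\<close>
definition id_ginv :: "real \<Rightarrow> (form2 \<Rightarrow> alg) \<Rightarrow> form3 \<Rightarrow> form1" where
  "id_ginv \<theta> Gi T = (\<Sum>i<4. \<Sum>j<4. \<Sum>k<4.
       lmul1 \<theta> (T i j k) (rmul1 \<theta> (dz i) (Gi (dz2 \<theta> j k))))"

definition riemannian_structure ::
  "real \<Rightarrow> (alg \<Rightarrow> form2) \<Rightarrow> (form2 \<Rightarrow> alg) \<Rightarrow> (form1 \<Rightarrow> form2) \<Rightarrow> (form2 \<Rightarrow> form2) \<Rightarrow> bool" where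
  "riemannian_structure \<theta> g Gi N S \<longleftrightarrow>
    \<comment> \<open>g is a bimodule map A -> Omega^1 (x) Omega^1\<close>
    (\<forall>a\<in>Alg. g a \<in> Form2) \<and>
    (\<forall>a\<in>Alg. \<forall>b\<in>Alg. g (a + b) = g a + g b) \<and>
    (\<forall>a\<in>Alg. \<forall>b\<in>Alg. g (amul \<theta> a b) = lmul2 \<theta> a (g b)) \<and>
    (\<forall>a\<in>Alg. \<forall>b\<in>Alg. g (amul \<theta> a b) = rmul2 \<theta> (g a) b) \<and>
    \<comment> \<open>g^{-1} is a bimodule map Omega^1 (x) Omega^1 -> A\<close>
    (\<forall>\<tau>\<in>Form2. Gi \<tau> \<in> Alg) \<and>
    (\<forall>\<tau>\<in>Form2. \<forall>\<upsilon>\<in>Form2. Gi (\<tau> + \<upsilon>) = Gi \<tau> + Gi \<upsilon>) \<and>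
    (\<forall>a\<in>Alg. \<forall>\<tau>\<in>Form2. Gi (lmul2 \<theta> a \<tau>) = amul \<theta> a (Gi \<tau>)) \<and>
    (\<forall>a\<in>Alg. \<forall>\<tau>\<in>Form2. Gi (rmul2 \<theta> \<tau> a) = amul \<theta> (Gi \<tau>) a) \<and>
    \<comment> \<open>inverse identities, with g(1) = sum_ij (G_ij dz^i) (x) dz^j\<close>
    (\<forall>\<omega>\<in>Form1. (\<Sum>i<4. \<Sum>j<4.
        lmul1 \<theta> (Gi (tens \<theta> \<omega> (lmul1 \<theta> (g oneA i j) (dz i)))) (dz j)) = \<omega>) \<and>
    (\<forall>\<omega>\<in>Form1. (\<Sum>i<4. \<Sum>j<4.
        rmul1 \<theta> (lmul1 \<theta> (g oneA i j) (dz i)) (Gi (tens \<theta> (dz j) \<omega>))) = \<omega>) \<and>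
    \<comment> \<open>sigma is a bimodule isomorphism\<close>
    bij_betw S Form2 Form2 \<and>
    (\<forall>\<tau>\<in>Form2. \<forall>\<upsilon>\<in>Form2. S (\<tau> + \<upsilon>) = S \<tau> + S \<upsilon>) \<and>
    (\<forall>a\<in>Alg. \<forall>\<tau>\<in>Form2. S (lmul2 \<theta> a \<tau>) = lmul2 \<theta> a (S \<tau>)) \<and>
    (\<forall>a\<in>Alg. \<forall>\<tau>\<in>Form2. S (rmul2 \<theta> \<tau> a) = rmul2 \<theta> (S \<tau>) a) \<and>
    \<comment> \<open>(nabla, sigma) is a bimodule connection\<close>
    (\<forall>\<omega>\<in>Form1. N \<omega> \<in> Form2) \<and>
    (\<forall>\<omega>\<in>Form1. \<forall>\<zeta>\<in>Form1. N (\<omega> + \<zeta>) = N \<omega> + N \<zeta>) \<and>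
    (\<forall>a\<in>Alg. \<forall>\<omega>\<in>Form1. N (lmul1 \<theta> a \<omega>) = lmul2 \<theta> a (N \<omega>) + tens \<theta> (dA \<theta> a) \<omega>) \<and>
    (\<forall>a\<in>Alg. \<forall>\<omega>\<in>Form1. N (rmul1 \<theta> \<omega> a) = rmul2 \<theta> (N \<omega>) a + S (tens \<theta> \<omega> (dA \<theta> a))) \<and>
    \<comment> \<open>g^{-1} o sigma = g^{-1}\<close>
    (\<forall>\<tau>\<in>Form2. Gi (S \<tau>) = Gi \<tau>) \<and>
    \<comment> \<open>(id (x) g^{-1}) o nabla^(x) = d o g^{-1}, checked on (generating) simple tensors\<close>
    (\<forall>\<omega>\<in>Form1. \<forall>\<zeta>\<in>Form1.
       id_ginv \<theta> Gi (tens12 \<theta> (N \<omega>) \<zeta> + sigma_id \<theta> S (tens21 \<theta> \<omega> (N \<zeta>)))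
         = dA \<theta> (Gi (tens \<theta> \<omega> \<zeta>)))"

end

theory Submission imports Defs begin

definition supp :: "alg \<Rightarrow> mi set" where "supp f = {m. f m \<noteq> 0}"
definition mono :: "mi \<Rightarrow> alg" where "mono q = (\<lambda>m. if m = q then 1 else 0)"
definition ek :: "nat \<Rightarrow> mi" where "ek k = (\<lambda>j. if j = k then 1 else 0)"
definition A4 :: "mi \<Rightarrow> bool" where "A4 m \<longleftrightarrow> (\<forall>k\<ge>4. m k = 0)"

lemma Alg_iff: "f \<in> Alg \<longleftrightarrow> finite (supp f) \<and> (\<forall>m\<in>supp f. A4 m)"
  by (auto simp: Alg_def supp_def A4_def)

lemma amul_alt:
  assumes "finite S" "finite T" "supp f \<subseteq> S" "supp g \<subseteq> T"
  shows "amul \<theta> f g p = (\<Sum>(m,n)\<in>S\<times>T. if m + n = p then mcoef \<theta> m n * f m * g n else 0)"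
proof -
  let ?X = "{(m, n). f m \<noteq> 0 \<and> g n \<noteq> 0 \<and> (\<lambda>k. m k + n k) = p}"
  have X: "?X \<subseteq> S \<times> T" using assms by (auto simp: supp_def)
  have "(\<Sum>(m,n)\<in>S\<times>T. if m + n = p then mcoef \<theta> m n * f m * g n else 0)
      = (\<Sum>(m,n)\<in>?X. if m + n = p then mcoef \<theta> m n * f m * g n else 0)"
    by (rule sum.mono_neutral_right) (use assms X in \<open>auto simp: plus_fun_def split: if_splits\<close>)
  also have "\<dots> = (\<Sum>(m,n)\<in>?X. mcoef \<theta> m n * f m * g n)"
    by (rule sum.cong) (auto simp: plus_fun_def)
  finally show ?thesis unfolding amul_def by simp
qed

lemma supp_add: "supp (f + g) \<subseteq> supp f \<union> supp g" by (auto simp: supp_def)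
lemma supp_smul: "supp (smulA c f) \<subseteq> supp f" by (auto simp: supp_def smulA_def)

lemma Alg_zero[simp]: "0 \<in> Alg" by (auto simp: Alg_def)
lemma Alg_add[simp]: "f \<in> Alg \<Longrightarrow> g \<in> Alg \<Longrightarrow> f + g \<in> Alg"
  unfolding Alg_iff using supp_add by (meson Un_iff finite_Un rev_finite_subset subsetD)
lemma Alg_smul[simp]: "f \<in> Alg \<Longrightarrow> smulA c f \<in> Alg"
  unfolding Alg_iff using supp_smul by (meson rev_finite_subset subsetD)
lemma Alg_sum: "(\<And>i. i \<in> I \<Longrightarrow> F i \<in> Alg) \<Longrightarrow> sum F I \<in> Alg"
  by (induction I rule: infinite_finite_induct) auto
lemma supp_mono: "supp (mono q) = {q}" by (auto simp: supp_def mono_def)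
lemma Alg_mono[simp]: "A4 q \<Longrightarrow> mono q \<in> Alg" by (auto simp: Alg_iff supp_mono)
lemma A4_0[simp]: "A4 0" by (simp add: A4_def)
lemma A4_ek[simp]: "k < 4 \<Longrightarrow> A4 (ek k)" by (simp add: A4_def ek_def)
lemma oneA_mono: "oneA = mono 0" by (simp add: oneA_def mono_def zero_fun_def)
lemma zgen_mono: "zgen i = mono (ek i)" by (simp add: zgen_def mono_def ek_def)
lemma Alg_oneA[simp]: "oneA \<in> Alg" by (simp add: oneA_mono)
lemma Alg_cA[simp]: "cA c \<in> Alg" by (simp add: cA_def)
lemma Alg_zgen[simp]: "i < 4 \<Longrightarrow> zgen i \<in> Alg" by (simp add: zgen_mono)

lemma smulA_apply[simp]: "smulA c f m = c * f m" by (simp add: smulA_def)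
lemma smulA_0[simp]: "smulA 0 f = 0" "smulA c 0 = 0" by (auto simp: smulA_def fun_eq_iff)
lemma smulA_1[simp]: "smulA 1 f = f" by (auto simp: smulA_def fun_eq_iff)
lemma smulA_smulA[simp]: "smulA a (smulA b f) = smulA (a*b) f" by (auto simp: smulA_def fun_eq_iff)
lemma smulA_add: "smulA c (f + g) = smulA c f + smulA c g" by (auto simp: smulA_def fun_eq_iff algebra_simps)

lemma amul_0[simp]: "amul \<theta> 0 g = 0" "amul \<theta> f 0 = 0"
  by (auto simp: amul_def fun_eq_iff)

lemma mcoef_0[simp]: "mcoef \<theta> m 0 = 1" "mcoef \<theta> 0 m = 1"
  by (simp_all add: mcoef_def)

lemma amul_cA_right[simp]: "amul \<theta> f (cA c) = smulA c f"
proof (rule ext)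
  fix p
  have "{(m, n). f m \<noteq> 0 \<and> cA c n \<noteq> 0 \<and> (\<lambda>k. m k + n k) = p}
        = (if c \<noteq> 0 \<and> f p \<noteq> 0 then {(p, 0)} else {})"
    by (auto simp: cA_def oneA_def zero_fun_def)
  then show "amul \<theta> f (cA c) p = smulA c f p"
    by (auto simp: amul_def cA_def oneA_def zero_fun_def[symmetric])
qed

lemma amul_cA_left[simp]: "amul \<theta> (cA c) f = smulA c f"
proof (rule ext)
  fix p
  have "{(m, n). cA c m \<noteq> 0 \<and> f n \<noteq> 0 \<and> (\<lambda>k. m k + n k) = p}
        = (if c \<noteq> 0 \<and> f p \<noteq> 0 then {(0, p)} else {})"
    by (auto simp: cA_def oneA_def zero_fun_def split: if_splits)
  then show "amul \<theta> (cA c) f p = smulA c f p"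
    by (auto simp: amul_def cA_def oneA_def zero_fun_def[symmetric])
qed

lemma cA_1: "cA 1 = oneA" by (simp add: cA_def)
lemma amul_oneA[simp]: "amul \<theta> f oneA = f" "amul \<theta> oneA f = f"
  using amul_cA_right[of \<theta> f 1] amul_cA_left[of \<theta> 1 f] by (simp_all add: cA_1)

lemma amul_mono: "amul \<theta> (mono a) (mono b) = smulA (mcoef \<theta> a b) (mono (a + b))"
proof (rule ext)
  fix p
  have "{(m, n). mono a m \<noteq> 0 \<and> mono b n \<noteq> 0 \<and> (\<lambda>k. m k + n k) = p}
        = (if p = a + b then {(a, b)} else {})"
    by (auto simp: mono_def plus_fun_def)
  then show "amul \<theta> (mono a) (mono b) p = smulA (mcoef \<theta> a b) (mono (a + b)) p"
    by (auto simp: amul_def mono_def)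
qed





lemma amul_add_left:
  assumes "f \<in> Alg" "g \<in> Alg" "h \<in> Alg"
  shows "amul \<theta> (f + g) h = amul \<theta> f h + amul \<theta> g h"
proof (rule ext)
  fix p
  let ?S = "supp f \<union> supp g" and ?T = "supp h"
  have fin: "finite ?S" "finite ?T" using assms by (auto simp: Alg_iff)
  have s: "supp (f+g) \<subseteq> ?S" "supp f \<subseteq> ?S" "supp g \<subseteq> ?S" using supp_add by auto
  show "amul \<theta> (f + g) h p = (amul \<theta> f h + amul \<theta> g h) p"
    unfolding plus_fun_apply amul_alt[OF fin s(1) order_refl] amul_alt[OF fin s(2) order_refl]
      amul_alt[OF fin s(3) order_refl] sum.distrib[symmetric]
    by (rule sum.cong) (auto simp: algebra_simps)
qed

lemma amul_add_right:
  assumes "f \<in> Alg" "g \<in> Alg" "h \<in> Alg"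
  shows "amul \<theta> h (f + g) = amul \<theta> h f + amul \<theta> h g"
proof (rule ext)
  fix p
  let ?S = "supp f \<union> supp g" and ?T = "supp h"
  have fin: "finite ?S" "finite ?T" using assms by (auto simp: Alg_iff)
  have s: "supp (f+g) \<subseteq> ?S" "supp f \<subseteq> ?S" "supp g \<subseteq> ?S" using supp_add by auto
  show "amul \<theta> h (f + g) p = (amul \<theta> h f + amul \<theta> h g) p"
    unfolding plus_fun_apply amul_alt[OF fin(2) fin(1) order_refl s(1)] amul_alt[OF fin(2) fin(1) order_refl s(2)]
      amul_alt[OF fin(2) fin(1) order_refl s(3)] sum.distrib[symmetric]
    by (rule sum.cong) (auto simp: algebra_simps)
qed


lemma amul_smul_left[simp]: "amul \<theta> (smulA c f) g = smulA c (amul \<theta> f g)"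
proof (cases "c = 0")
  case False
  show ?thesis
  proof (rule ext)
    fix p
    have eq: "{(m,n). smulA c f m \<noteq> 0 \<and> g n \<noteq> 0 \<and> (\<lambda>k. m k + n k) = p}
      = {(m,n). f m \<noteq> 0 \<and> g n \<noteq> 0 \<and> (\<lambda>k. m k + n k) = p}" using False by auto
    have "amul \<theta> (smulA c f) g p = (\<Sum>x\<in>{(m,n). f m \<noteq> 0 \<and> g n \<noteq> 0 \<and> (\<lambda>k. m k + n k) = p}.
           c * (case x of (m,n) \<Rightarrow> mcoef \<theta> m n * f m * g n))"
      unfolding amul_def eq by (intro sum.cong) auto
    also have "\<dots> = smulA c (amul \<theta> f g) p" by (simp add: amul_def sum_distrib_left)
    finally show "amul \<theta> (smulA c f) g p = smulA c (amul \<theta> f g) p" .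
  qed
qed simp

lemma amul_smul_right[simp]: "amul \<theta> f (smulA c g) = smulA c (amul \<theta> f g)"
proof (cases "c = 0")
  case False
  show ?thesis
  proof (rule ext)
    fix p
    have eq: "{(m,n). f m \<noteq> 0 \<and> smulA c g n \<noteq> 0 \<and> (\<lambda>k. m k + n k) = p}
      = {(m,n). f m \<noteq> 0 \<and> g n \<noteq> 0 \<and> (\<lambda>k. m k + n k) = p}" using False by auto
    have "amul \<theta> f (smulA c g) p = (\<Sum>x\<in>{(m,n). f m \<noteq> 0 \<and> g n \<noteq> 0 \<and> (\<lambda>k. m k + n k) = p}.
           c * (case x of (m,n) \<Rightarrow> mcoef \<theta> m n * f m * g n))"
      unfolding amul_def eq by (intro sum.cong) auto
    also have "\<dots> = smulA c (amul \<theta> f g) p" by (simp add: amul_def sum_distrib_left)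
    finally show "amul \<theta> f (smulA c g) p = smulA c (amul \<theta> f g) p" .
  qed
qed simp

lemma amul_nz:
  assumes "amul \<theta> f g p \<noteq> 0"
  shows "\<exists>m n. f m \<noteq> 0 \<and> g n \<noteq> 0 \<and> m + n = p"
proof (rule ccontr)
  assume "\<not> ?thesis"
  then have eq: "{(m,n). f m \<noteq> 0 \<and> g n \<noteq> 0 \<and> (\<lambda>k. m k + n k) = p} = {}"
    by (auto simp: plus_fun_def)
  have "amul \<theta> f g p = 0" unfolding amul_def by (subst eq) simp
  then show False using assms by simp
qed

lemma Alg_amul[simp]:
  assumes "f \<in> Alg" "g \<in> Alg" shows "amul \<theta> f g \<in> Alg"
proof -
  have fin: "finite (supp f)" "finite (supp g)" using assms by (auto simp: Alg_iff)
  have sub: "supp (amul \<theta> f g) \<subseteq> (\<lambda>(m,n). m + n) ` (supp f \<times> supp g)"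
  proof
    fix p assume "p \<in> supp (amul \<theta> f g)"
    then have "amul \<theta> f g p \<noteq> 0" by (simp add: supp_def)
    then obtain m n where "f m \<noteq> 0" "g n \<noteq> 0" "m + n = p"
      using amul_nz by blast
    then show "p \<in> (\<lambda>(m,n). m + n) ` (supp f \<times> supp g)"
      by (auto simp: supp_def intro!: image_eqI[where x="(m,n)"])
  qed
  have "finite (supp (amul \<theta> f g))" using fin by (intro finite_subset[OF sub]) auto
  moreover have "\<forall>p\<in>supp (amul \<theta> f g). A4 p"
  proof
    fix p assume "p \<in> supp (amul \<theta> f g)"
    with sub obtain m n where "m \<in> supp f" "n \<in> supp g" "p = m + n" by auto
    then show "A4 p" using assms by (auto simp: Alg_iff A4_def)
  qed
  ultimately show ?thesis by (simp add: Alg_iff)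
qed


section \<open>Exponential form of the coefficients\<close>

definition Sx :: "nat \<Rightarrow> nat \<Rightarrow> int" where
  "Sx a b = [[0,-1,0,1],[1,0,-1,0],[0,1,0,-1],[-1,0,1,0]] ! a ! b"

definition E :: "real \<Rightarrow> complex \<Rightarrow> complex" where
  "E \<theta> x = exp (\<i> * of_real \<theta> * x)"

lemma less4: "(a::nat) < 4 \<Longrightarrow> a = 0 \<or> a = 1 \<or> a = 2 \<or> a = 3" by auto

lemma E_add: "E \<theta> (x + y) = E \<theta> x * E \<theta> y" by (simp add: E_def distrib_left exp_add)
lemma E_0[simp]: "E \<theta> 0 = 1" by (simp add: E_def)
lemma E_pow: "E \<theta> x ^ k = E \<theta> (of_nat k * x)"
  by (simp add: E_def exp_of_nat_mult[symmetric] mult_ac)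
lemma E_prod: "finite A \<Longrightarrow> (\<Prod>j\<in>A. E \<theta> (f j)) = E \<theta> (\<Sum>j\<in>A. f j)"
  by (induction A rule: finite_induct) (auto simp: E_add)
lemma E_nz[simp]: "E \<theta> x \<noteq> 0" by (simp add: E_def)

lemma Rmat_E: "a < 4 \<Longrightarrow> b < 4 \<Longrightarrow> Rmat \<theta> a b = E \<theta> (of_int (Sx a b))"
  by (auto dest!: less4 simp: Rmat_def Sx_def E_def)

lemma Rmat_nz: "a < 4 \<Longrightarrow> b < 4 \<Longrightarrow> Rmat \<theta> a b \<noteq> 0" by (simp add: Rmat_E)

lemma Sx_anti: "a < 4 \<Longrightarrow> b < 4 \<Longrightarrow> Sx a b = - Sx b a"
  by (auto dest!: less4 simp: Sx_def)

lemma Rmat_inv: "a < 4 \<Longrightarrow> b < 4 \<Longrightarrow> Rmat \<theta> a b * Rmat \<theta> b a = 1"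
  by (simp add: Rmat_E E_add[symmetric] Sx_anti[of a b])

definition lam :: "real \<Rightarrow> nat \<Rightarrow> mi \<Rightarrow> complex" where
  "lam \<theta> i n = (\<Prod>j<4. Rmat \<theta> j i ^ n j)"

definition cc :: "real \<Rightarrow> nat \<Rightarrow> mi \<Rightarrow> complex" where
  "cc \<theta> k q = (\<Prod>j\<in>{k<..<4}. Rmat \<theta> j k ^ q j)"

lemma twist_lam: "twist \<theta> i b = (\<lambda>n. lam \<theta> i n * b n)"
  by (simp add: twist_def lam_def)

lemma lam_E: "i < 4 \<Longrightarrow> lam \<theta> i n = E \<theta> (\<Sum>j<4. of_nat (n j) * of_int (Sx j i))"
  unfolding lam_def by (simp add: Rmat_E E_pow E_prod)

lemma cc_E: "k < 4 \<Longrightarrow> cc \<theta> k n = E \<theta> (\<Sum>j\<in>{k<..<4}. of_nat (n j) * of_int (Sx j k))"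
  unfolding cc_def by (simp add: Rmat_E E_pow E_prod)

lemma mcoef_E: "mcoef \<theta> m n = E \<theta> (\<Sum>i<4. \<Sum>j<i. of_nat (m i * n j) * of_int (Sx j i))"
  unfolding mcoef_def by (simp add: Rmat_E E_pow E_prod)

lemma sum4: "(\<Sum>j<4. f j) = f 0 + f 1 + f 2 + f (3::nat)"
  by (simp add: eval_nat_numeral)
lemma sumlt: "(\<Sum>j<0. f j) = 0" "(\<Sum>j<1. f j) = f 0" "(\<Sum>j<2. f j) = f 0 + f 1"
  "(\<Sum>j<3. f j) = f 0 + f 1 + f (2::nat)"
  by (simp_all add: eval_nat_numeral)
lemma gtlt4: "{0<..<4::nat} = {1,2,3}" "{1<..<4::nat} = {2,3}" "{2<..<4::nat} = {3}" "{3<..<4::nat} = {}" "{Suc 0<..<4::nat} = {2,3}"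
  by auto

lemma Sx_vals: "Sx 0 0 = 0" "Sx 0 1 = -1" "Sx 0 2 = 0" "Sx 0 3 = 1"
  "Sx 1 0 = 1" "Sx 1 1 = 0" "Sx 1 2 = -1" "Sx 1 3 = 0"
  "Sx 2 0 = 0" "Sx 2 1 = 1" "Sx 2 2 = 0" "Sx 2 3 = -1"
  "Sx 3 0 = -1" "Sx 3 1 = 0" "Sx 3 2 = 1" "Sx 3 3 = 0"
  by (simp_all add: Sx_def)

lemma Sx_vals': "Sx 0 (Suc 0) = -1" "Sx (Suc 0) 0 = 1" "Sx (Suc 0) (Suc 0) = 0" "Sx (Suc 0) 2 = -1"
  "Sx (Suc 0) 3 = 0" "Sx 2 (Suc 0) = 1" "Sx 3 (Suc 0) = 0"
  by (simp_all add: Sx_def)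

lemmas expand = sum4 sumlt gtlt4 Sx_vals Sx_vals'

lemma I4: "lam \<theta> 0 n * lam \<theta> 2 n = 1" "lam \<theta> 2 n * lam \<theta> 0 n = 1"
  "lam \<theta> 1 n * lam \<theta> 3 n = 1" "lam \<theta> 3 n * lam \<theta> 1 n = 1"
  by (simp_all add: lam_E E_add[symmetric] expand algebra_simps)

lemma I4': "lam \<theta> 0 n * lam \<theta> 2 n = 1" "lam \<theta> 2 n * lam \<theta> 0 n = 1"
  "lam \<theta> (Suc 0) n * lam \<theta> 3 n = 1" "lam \<theta> 3 n * lam \<theta> (Suc 0) n = 1"
  using I4 by simp_all

lemma I1:
  assumes "k < 4"
  shows "mcoef \<theta> (m + ek k) n * cc \<theta> k (m + ek k + n) = cc \<theta> k (m + ek k) * lam \<theta> k n * mcoef \<theta> m n"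
  using less4[OF assms(1)]
  by (elim disjE) (simp_all add: mcoef_E cc_E lam_E E_add[symmetric] expand ek_def algebra_simps)

lemma I2:
  assumes "k < 4"
  shows "mcoef \<theta> m (n + ek k) * cc \<theta> k (m + (n + ek k)) = cc \<theta> k (n + ek k) * mcoef \<theta> m n"
  using less4[OF assms(1)]
  by (elim disjE) (simp_all add: mcoef_E cc_E lam_E E_add[symmetric] expand ek_def algebra_simps)

lemma I3:
  assumes "k < 4" "l < 4"
  shows "lam \<theta> l (q + ek k) = Rmat \<theta> k l * lam \<theta> l q"
  using less4[OF assms(1)] less4[OF assms(2)]
  by (elim disjE) (simp_all add: Rmat_E lam_E E_add[symmetric] expand ek_def algebra_simps)

lemma cc_sub: "k < 4 \<Longrightarrow> cc \<theta> k (p - ek k) = cc \<theta> k p"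
  unfolding cc_def by (intro prod.cong) (auto simp: ek_def)

lemma mcoef_nz[simp]: "mcoef \<theta> m n \<noteq> 0" by (simp add: mcoef_E)
lemma lam_nz: "i < 4 \<Longrightarrow> lam \<theta> i n \<noteq> 0" by (simp add: lam_E)


section \<open>Twist\<close>

lemma twist_add: "twist \<theta> i (f + g) = twist \<theta> i f + twist \<theta> i g"
  by (simp add: twist_lam fun_eq_iff distrib_left)
lemma twist_smul[simp]: "twist \<theta> i (smulA c f) = smulA c (twist \<theta> i f)"
  by (simp add: twist_lam fun_eq_iff)
lemma twist_zero[simp]: "twist \<theta> i 0 = 0"
  by (simp add: twist_lam fun_eq_iff)
lemma lam_0: "lam \<theta> i (\<lambda>_. 0) = 1" by (simp add: lam_def)
lemma twist_oneA[simp]: "twist \<theta> i oneA = oneA"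
  by (rule ext) (auto simp: twist_lam oneA_def lam_0)
lemma twist_cA[simp]: "twist \<theta> i (cA c) = cA c"
  by (simp add: cA_def)
lemma twist_mono: "twist \<theta> i (mono n) = smulA (lam \<theta> i n) (mono n)"
  by (rule ext) (auto simp: twist_lam mono_def)
lemma twist_comm: "twist \<theta> i (twist \<theta> j f) = twist \<theta> j (twist \<theta> i f)"
  by (simp add: twist_lam fun_eq_iff)
lemma Alg_twist[simp]: "f \<in> Alg \<Longrightarrow> twist \<theta> i f \<in> Alg"
proof -
  assume "f \<in> Alg"
  moreover have "supp (twist \<theta> i f) \<subseteq> supp f" by (auto simp: supp_def twist_lam)
  ultimately show ?thesis unfolding Alg_iff by (meson rev_finite_subset subsetD)
qed

lemma Pmat_cases: "i < 4 \<Longrightarrow> j < 4 \<Longrightarrow> Pmat i j \<noteq> 0 \<Longrightarrow>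
   (i = 0 \<and> j = 2) \<or> (i = 1 \<and> j = 3) \<or> (i = 2 \<and> j = 0) \<or> (i = 3 \<and> j = 1)"
  by (auto dest!: less4 simp: Pmat_def)

lemma twist_pair: "i < 4 \<Longrightarrow> j < 4 \<Longrightarrow> Pmat i j \<noteq> 0 \<Longrightarrow> twist \<theta> i (twist \<theta> j f) = f"
  by (drule (2) Pmat_cases) (auto simp: twist_lam fun_eq_iff mult.assoc[symmetric] I4 I4')

section \<open>The explicit derivation\<close>

lemma sum_fun_apply: "(sum F A) x = (\<Sum>a\<in>A. F a x)"
  by (induction A rule: infinite_finite_induct) auto

definition D0 :: "real \<Rightarrow> alg \<Rightarrow> form1" where
  "D0 \<theta> a = (\<lambda>k q. if k < 4 then of_nat (Suc (q k)) * cc \<theta> k q * a (q + ek k) else 0)"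

lemma D0_add_k[simp]: "D0 \<theta> (a + b) k = D0 \<theta> a k + D0 \<theta> b k"
  by (simp add: D0_def fun_eq_iff algebra_simps)
lemma D0_smul_k[simp]: "D0 \<theta> (smulA c a) k = smulA c (D0 \<theta> a k)"
  by (simp add: D0_def fun_eq_iff algebra_simps)
lemma D0_zero_k[simp]: "D0 \<theta> 0 k = 0"
  by (simp add: D0_def fun_eq_iff)
lemma D0_ge4[simp]: "\<not> k < 4 \<Longrightarrow> D0 \<theta> a k = 0"
  by (simp add: D0_def fun_eq_iff)

lemma D0_Alg[simp]:
  assumes "a \<in> Alg" shows "D0 \<theta> a k \<in> Alg"
proof (cases "k < 4")
  case True
  have inj: "inj (\<lambda>q::mi. q + ek k)" by (rule injI) simp
  have sub: "supp (D0 \<theta> a k) \<subseteq> (\<lambda>q. q + ek k) -` supp a"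
    using True by (auto simp: supp_def D0_def)
  have fin: "finite (supp (D0 \<theta> a k))"
    using assms by (intro finite_subset[OF sub] finite_vimageI inj) (auto simp: Alg_iff)
  have "A4 q" if "q \<in> supp (D0 \<theta> a k)" for q
  proof -
    have "q + ek k \<in> supp a" using sub that by auto
    then have "A4 (q + ek k)" using assms by (auto simp: Alg_iff)
    then show "A4 q" using True by (auto simp: A4_def ek_def)
  qed
  then show ?thesis using fin by (auto simp: Alg_iff)
qed simp

lemma D0_Form1: "a \<in> Alg \<Longrightarrow> D0 \<theta> a \<in> Form1"
  by (auto simp: Form1_def)

lemma cc_add_ek[simp]: "cc \<theta> k (p + ek k) = cc \<theta> k p"
  unfolding cc_def by (intro prod.cong) (auto simp: ek_def)

lemma D0_mono1: "k < 4 \<Longrightarrow> D0 \<theta> (mono (p + ek k)) k = smulA (of_nat (Suc (p k)) * cc \<theta> k p) (mono p)"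
  by (rule ext) (auto simp: D0_def mono_def)

lemma cc_eq: "(\<And>j. j \<noteq> k \<Longrightarrow> p j = q j) \<Longrightarrow> cc \<theta> k p = cc \<theta> k q"
  unfolding cc_def by (intro prod.cong) auto

lemma smulA_add_left: "smulA a f + smulA b f = smulA (a + b) f"
  by (simp add: fun_eq_iff distrib_right)

lemma coef_helper: "A * B = (Z::complex) \<Longrightarrow> A * (s * B) = s * Z"
  by (metis mult.left_commute)

lemma D0_mono0: "k < 4 \<Longrightarrow> p k = 0 \<Longrightarrow> D0 \<theta> (mono p) k = 0"
proof -
  assume k: "k < 4" "p k = 0"
  have "q + ek k \<noteq> p" for q
  proof
    assume "q + ek k = p"
    then have "q k + ek k k = p k" by (auto simp: fun_eq_iff)
    with k show False by (simp add: ek_def)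
  qed
  then show ?thesis using k by (auto simp: D0_def fun_eq_iff mono_def)
qed

lemma split_ek: "m k \<noteq> 0 \<Longrightarrow> \<exists>m'. m = m' + ek k"
  by (rule exI[of _ "\<lambda>j. m j - ek k j"]) (auto simp: fun_eq_iff ek_def)

lemma ek_k[simp]: "ek k k = 1" by (simp add: ek_def)

lemma leib_mono:
  assumes k: "k < 4"
  shows "D0 \<theta> (amul \<theta> (mono m) (mono n)) k
        = amul \<theta> (D0 \<theta> (mono m) k) (twist \<theta> k (mono n)) + amul \<theta> (mono m) (D0 \<theta> (mono n) k)"
proof (cases "m k = 0")
  case m0: True
  show ?thesis
  proof (cases "n k = 0")
    case True
    with m0 k show ?thesis by (simp add: amul_mono D0_mono0)
  next
    case False
    then obtain n' where n: "n = n' + ek k" using split_ek by blast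
    have e: "m + (n' + ek k) = (m + n') + ek k" by (simp add: add.assoc)
    have L: "D0 \<theta> (amul \<theta> (mono m) (mono n)) k
       = smulA (mcoef \<theta> m n * (of_nat (Suc (n' k)) * cc \<theta> k (m + n'))) (mono (m + n'))"
      unfolding n using k m0 by (simp add: amul_mono e D0_mono1)
    have R: "amul \<theta> (D0 \<theta> (mono m) k) (twist \<theta> k (mono n)) + amul \<theta> (mono m) (D0 \<theta> (mono n) k)
       = smulA (of_nat (Suc (n' k)) * (cc \<theta> k n' * mcoef \<theta> m n')) (mono (m + n'))"
      unfolding n using k m0 by (simp add: D0_mono0 D0_mono1 amul_mono mult_ac)
    have C: "mcoef \<theta> m n * cc \<theta> k (m + n') = cc \<theta> k n' * mcoef \<theta> m n'"
    proof -
      have "cc \<theta> k (m + n') = cc \<theta> k (m + (n' + ek k))" by (rule cc_eq) (simp add: ek_def)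
      moreover have "cc \<theta> k (n' + ek k) = cc \<theta> k n'" by (rule cc_eq) (simp add: ek_def)
      ultimately show ?thesis using I2[OF k, of \<theta> m n'] n by simp
    qed
    show ?thesis unfolding L R coef_helper[OF C] ..
  qed
next
  case False
  then obtain m' where m: "m = m' + ek k" using split_ek by blast
  show ?thesis
  proof (cases "n k = 0")
    case True
    have e: "m' + ek k + n = (m' + n) + ek k" by (simp add: ac_simps)
    have L: "D0 \<theta> (amul \<theta> (mono m) (mono n)) k
       = smulA (mcoef \<theta> m n * (of_nat (Suc (m' k)) * cc \<theta> k (m' + n))) (mono (m' + n))"
      unfolding m using k True by (simp add: amul_mono e D0_mono1)
    have R: "amul \<theta> (D0 \<theta> (mono m) k) (twist \<theta> k (mono n)) + amul \<theta> (mono m) (D0 \<theta> (mono n) k)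
       = smulA (of_nat (Suc (m' k)) * (cc \<theta> k m' * lam \<theta> k n * mcoef \<theta> m' n)) (mono (m' + n))"
      unfolding m using k True by (simp add: D0_mono0 D0_mono1 amul_mono twist_mono mult_ac)
    have C: "mcoef \<theta> m n * cc \<theta> k (m' + n) = cc \<theta> k m' * lam \<theta> k n * mcoef \<theta> m' n"
    proof -
      have "cc \<theta> k (m' + n) = cc \<theta> k (m' + ek k + n)" by (rule cc_eq) (simp add: ek_def)
      moreover have "cc \<theta> k (m' + ek k) = cc \<theta> k m'" by (rule cc_eq) (simp add: ek_def)
      ultimately show ?thesis using I1[OF k, of \<theta> m' n] m by simp
    qed
    show ?thesis unfolding L R coef_helper[OF C] ..
  next
    case False
    then obtain n' where n: "n = n' + ek k" using split_ek by blast
    define P where "P = m' + n' + ek k"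
    have e: "m' + ek k + (n' + ek k) = P + ek k" by (simp add: P_def ac_simps)
    have e1: "m' + (n' + ek k) = P" by (simp add: P_def ac_simps)
    have e2: "m' + ek k + n' = P" by (simp add: P_def ac_simps)
    have Pk: "P k = Suc (m' k + n' k)" by (simp add: P_def)
    have ccP: "cc \<theta> k P = cc \<theta> k (m' + n')" by (rule cc_eq) (simp add: P_def ek_def)
    have L: "D0 \<theta> (amul \<theta> (mono m) (mono n)) k
       = smulA (mcoef \<theta> m n * (of_nat (Suc (P k)) * cc \<theta> k P)) (mono P)"
      unfolding m n using k by (simp only: amul_mono e D0_mono1 smulA_smulA D0_smul_k)
    have R: "amul \<theta> (D0 \<theta> (mono m) k) (twist \<theta> k (mono n)) + amul \<theta> (mono m) (D0 \<theta> (mono n) k)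
       = smulA (of_nat (Suc (m' k)) * (cc \<theta> k m' * lam \<theta> k n * mcoef \<theta> m' n)) (mono P)
       + smulA (of_nat (Suc (n' k)) * (cc \<theta> k n' * mcoef \<theta> m n')) (mono P)"
      unfolding m n using k
      by (simp add: D0_mono1 amul_mono twist_mono e1 e2 mult_ac)
    have C1: "mcoef \<theta> m n * cc \<theta> k P = cc \<theta> k m' * lam \<theta> k n * mcoef \<theta> m' n"
    proof -
      have "cc \<theta> k P = cc \<theta> k (m' + ek k + n)" by (rule cc_eq) (simp add: P_def n ek_def)
      moreover have "cc \<theta> k (m' + ek k) = cc \<theta> k m'" by (rule cc_eq) (simp add: ek_def)
      ultimately show ?thesis using I1[OF k, of \<theta> m' n] m by simp
    qed
    have C2: "mcoef \<theta> m n * cc \<theta> k P = cc \<theta> k n' * mcoef \<theta> m n'"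
    proof -
      have "cc \<theta> k P = cc \<theta> k (m + (n' + ek k))" by (rule cc_eq) (simp add: P_def m ek_def)
      moreover have "cc \<theta> k (n' + ek k) = cc \<theta> k n'" by (rule cc_eq) (simp add: ek_def)
      ultimately show ?thesis using I2[OF k, of \<theta> m n'] n by simp
    qed
    have "mcoef \<theta> m n * (of_nat (Suc (P k)) * cc \<theta> k P)
        = of_nat (Suc (m' k)) * (mcoef \<theta> m n * cc \<theta> k P) + of_nat (Suc (n' k)) * (mcoef \<theta> m n * cc \<theta> k P)"
      unfolding Pk by (simp add: algebra_simps)
    then show ?thesis unfolding L R smulA_add_left C1[symmetric] C2[symmetric] by simp
  qed
qed


lemma Alg_rep: "a \<in> Alg \<Longrightarrow> a = (\<Sum>m\<in>supp a. smulA (a m) (mono m))"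
proof (rule ext)
  fix q assume a: "a \<in> Alg"
  have "(\<Sum>m\<in>supp a. smulA (a m) (mono m)) q = (\<Sum>m\<in>supp a. if m = q then a m else 0)"
    unfolding sum_fun_apply by (intro sum.cong) (auto simp: mono_def)
  also have "\<dots> = a q" using a by (simp add: sum.delta' Alg_iff) (simp add: supp_def)
  finally show "a q = (\<Sum>m\<in>supp a. smulA (a m) (mono m)) q" by simp
qed

lemma Alg_induct[consumes 1, case_names zero add mono]:
  assumes a: "a \<in> Alg" and z: "P 0"
    and ad: "\<And>x y. x \<in> Alg \<Longrightarrow> y \<in> Alg \<Longrightarrow> P x \<Longrightarrow> P y \<Longrightarrow> P (x + y)"
    and mo: "\<And>c m. A4 m \<Longrightarrow> P (smulA c (mono m))"
  shows "P a"
proof -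
  have fin: "finite (supp a)" and A: "\<And>m. m \<in> supp a \<Longrightarrow> A4 m" using a by (auto simp: Alg_iff)
  have "F \<subseteq> supp a \<Longrightarrow> P (\<Sum>m\<in>F. smulA (a m) (mono m)) \<and> (\<Sum>m\<in>F. smulA (a m) (mono m)) \<in> Alg" for F
  proof (induction F rule: infinite_finite_induct)
    case (infinite F)
    then show ?case using fin finite_subset by blast
  next
    case empty
    show ?case using z by (simp only: sum.empty Alg_zero simp_thms)
  next
    case (insert x F)
    then have x: "A4 x" using A by auto
    have F: "F \<subseteq> supp a" using insert by auto
    have m1: "smulA (a x) (mono x) \<in> Alg" using x by (rule Alg_mono[THEN Alg_smul])
    have "P (smulA (a x) (mono x) + (\<Sum>m\<in>F. smulA (a m) (mono m)))"
      by (rule ad[OF m1]) (use insert.IH[OF F] mo[OF x] in blast)+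
    moreover have "smulA (a x) (mono x) + (\<Sum>m\<in>F. smulA (a m) (mono m)) \<in> Alg"
      using m1 insert.IH[OF F] by (rule_tac Alg_add) blast+
    moreover have "(\<Sum>m\<in>insert x F. smulA (a m) (mono m)) = smulA (a x) (mono x) + (\<Sum>m\<in>F. smulA (a m) (mono m))"
      using insert(1,2) by (rule sum.insert)
    ultimately show ?case by (simp only:)
  qed
  then show ?thesis using Alg_rep[OF a] by (metis order_refl)
qed

lemma fun_contract: "(\<lambda>a. 0) = (0::alg)" "(\<lambda>a. f a + g a) = f + (g::alg)"
  by (simp_all add: zero_fun_def plus_fun_def)

lemma D0_leib_k:
  assumes a: "a \<in> Alg" and b: "b \<in> Alg" and k: "k < 4"
  shows "D0 \<theta> (amul \<theta> a b) k = amul \<theta> (D0 \<theta> a k) (twist \<theta> k b) + amul \<theta> a (D0 \<theta> b k)"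
proof -
  have mono_case: "D0 \<theta> (amul \<theta> (smulA c (mono m)) b) k
     = amul \<theta> (D0 \<theta> (smulA c (mono m)) k) (twist \<theta> k b) + amul \<theta> (smulA c (mono m)) (D0 \<theta> b k)"
    if m: "A4 m" and b: "b \<in> Alg" for c m b
    using b
  proof (rule Alg_induct[where P = "\<lambda>b. D0 \<theta> (amul \<theta> (smulA c (mono m)) b) k
     = amul \<theta> (D0 \<theta> (smulA c (mono m)) k) (twist \<theta> k b) + amul \<theta> (smulA c (mono m)) (D0 \<theta> b k)"])
    show "D0 \<theta> (amul \<theta> (smulA c (mono m)) 0) k
     = amul \<theta> (D0 \<theta> (smulA c (mono m)) k) (twist \<theta> k 0) + amul \<theta> (smulA c (mono m)) (D0 \<theta> 0 k)"
      by simp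
  next
    fix x y assume "x \<in> Alg" "y \<in> Alg"
      "D0 \<theta> (amul \<theta> (smulA c (mono m)) x) k
     = amul \<theta> (D0 \<theta> (smulA c (mono m)) k) (twist \<theta> k x) + amul \<theta> (smulA c (mono m)) (D0 \<theta> x k)"
      "D0 \<theta> (amul \<theta> (smulA c (mono m)) y) k
     = amul \<theta> (D0 \<theta> (smulA c (mono m)) k) (twist \<theta> k y) + amul \<theta> (smulA c (mono m)) (D0 \<theta> y k)"
    then show "D0 \<theta> (amul \<theta> (smulA c (mono m)) (x + y)) k
     = amul \<theta> (D0 \<theta> (smulA c (mono m)) k) (twist \<theta> k (x + y)) + amul \<theta> (smulA c (mono m)) (D0 \<theta> (x + y) k)"
      using m by (simp add: amul_add_right twist_add smulA_add add_ac)
  next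
    fix d n assume "A4 n"
    show "D0 \<theta> (amul \<theta> (smulA c (mono m)) (smulA d (mono n))) k
     = amul \<theta> (D0 \<theta> (smulA c (mono m)) k) (twist \<theta> k (smulA d (mono n))) + amul \<theta> (smulA c (mono m)) (D0 \<theta> (smulA d (mono n)) k)"
      using leib_mono[OF k, of \<theta> m n] by (simp add: smulA_add)
  qed
  show ?thesis
    using a
  proof (rule Alg_induct[where P = "\<lambda>a. D0 \<theta> (amul \<theta> a b) k = amul \<theta> (D0 \<theta> a k) (twist \<theta> k b) + amul \<theta> a (D0 \<theta> b k)"])
    show "D0 \<theta> (amul \<theta> 0 b) k = amul \<theta> (D0 \<theta> 0 k) (twist \<theta> k b) + amul \<theta> 0 (D0 \<theta> b k)"
      by simp
  next
    fix x y assume "x \<in> Alg" "y \<in> Alg"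
      "D0 \<theta> (amul \<theta> x b) k = amul \<theta> (D0 \<theta> x k) (twist \<theta> k b) + amul \<theta> x (D0 \<theta> b k)"
      "D0 \<theta> (amul \<theta> y b) k = amul \<theta> (D0 \<theta> y k) (twist \<theta> k b) + amul \<theta> y (D0 \<theta> b k)"
    then show "D0 \<theta> (amul \<theta> (x + y) b) k = amul \<theta> (D0 \<theta> (x + y) k) (twist \<theta> k b) + amul \<theta> (x + y) (D0 \<theta> b k)"
      using b by (simp add: amul_add_left amul_add_right)
  next
    fix c m assume "A4 m"
    then show "D0 \<theta> (amul \<theta> (smulA c (mono m)) b) k = amul \<theta> (D0 \<theta> (smulA c (mono m)) k) (twist \<theta> k b) + amul \<theta> (smulA c (mono m)) (D0 \<theta> b k)"
      using mono_case b by blast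
  qed
qed

lemma D0_leib:
  assumes a: "a \<in> Alg" and b: "b \<in> Alg"
  shows "D0 \<theta> (amul \<theta> a b) = rmul1 \<theta> (D0 \<theta> a) b + lmul1 \<theta> a (D0 \<theta> b)"
proof (rule ext)
  fix k show "D0 \<theta> (amul \<theta> a b) k = (rmul1 \<theta> (D0 \<theta> a) b + lmul1 \<theta> a (D0 \<theta> b)) k"
    by (cases "k < 4") (simp_all add: D0_leib_k assms rmul1_def lmul1_def)
qed

lemma D0_zgen: "i < 4 \<Longrightarrow> D0 \<theta> (zgen i) = dz i"
proof (rule ext)
  fix k assume i: "i < 4"
  show "D0 \<theta> (zgen i) k = dz i k"
  proof (cases "k < 4")
    case True
    show ?thesis
    proof (cases "k = i")
      case True
      have "cc \<theta> i 0 = 1" by (simp add: cc_def)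
      then have "D0 \<theta> (mono (ek i)) i = mono 0" using D0_mono1[OF i, of \<theta> 0] by simp
      then show ?thesis using True i by (simp add: zgen_mono dz_def oneA_mono)
    next
      case False
      then show ?thesis using \<open>k < 4\<close> by (simp add: zgen_mono D0_mono0 dz_def ek_def)
    qed
  qed (use i in \<open>simp add: dz_def\<close>)
qed

definition Dext :: "real \<Rightarrow> alg \<Rightarrow> form1" where
  "Dext \<theta> a = (if a \<in> Alg then D0 \<theta> a else 0)"

lemma D0_add: "D0 \<theta> (a + b) = D0 \<theta> a + D0 \<theta> b" by (rule ext) simp
lemma D0_smul: "D0 \<theta> (smulA c a) = (\<lambda>i. smulA c (D0 \<theta> a i))" by (rule ext) simp

lemma Dext_leib: "is_leibniz_d \<theta> (Dext \<theta>)"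
  unfolding is_leibniz_d_def Dext_def
  by (simp add: D0_Form1 D0_add D0_smul D0_leib D0_zgen)

lemma leib_zero: "is_leibniz_d \<theta> D \<Longrightarrow> D 0 = 0"
  unfolding is_leibniz_d_def by (metis Alg_zero add.right_neutral add_left_cancel)

lemma leib_oneA: "is_leibniz_d \<theta> D \<Longrightarrow> D oneA = 0"
proof -
  assume D: "is_leibniz_d \<theta> D"
  then have "\<forall>a\<in>Alg. \<forall>b\<in>Alg. D (amul \<theta> a b) = rmul1 \<theta> (D a) b + lmul1 \<theta> a (D b)"
    unfolding is_leibniz_d_def by blast
  then have "D (amul \<theta> oneA oneA) = rmul1 \<theta> (D oneA) oneA + lmul1 \<theta> oneA (D oneA)"
    using Alg_oneA by blast
  moreover have "rmul1 \<theta> (D oneA) oneA = D oneA" by (simp add: rmul1_def)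
  moreover have "lmul1 \<theta> oneA (D oneA) = D oneA" by (simp add: lmul1_def)
  ultimately have "D oneA = D oneA + D oneA" by simp
  then show ?thesis by simp
qed

lemma sum_ek: "k < 4 \<Longrightarrow> (\<Sum>j<4. ek k j) = 1"
  by (simp add: ek_def)

lemma leib_agree_mono_aux:
  assumes D1: "is_leibniz_d \<theta> D1" and D2: "is_leibniz_d \<theta> D2"
  shows "\<forall>m. A4 m \<and> sum m {..<4} = s \<longrightarrow> D1 (mono m) = D2 (mono m)"
proof (induction s)
  case 0
  show ?case
  proof (intro allI impI)
    fix m :: mi assume h: "A4 m \<and> sum m {..<4} = 0"
    have "m x = 0" for x
      by (cases "x < 4") (use h in \<open>auto simp: A4_def\<close>)
    then have "m = 0" by (simp add: fun_eq_iff)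
    then show "D1 (mono m) = D2 (mono m)" using leib_oneA[OF D1] leib_oneA[OF D2] by (simp add: oneA_mono)
  qed
next
  case (Suc s)
  show ?case
  proof (intro allI impI)
    fix m :: mi assume h: "A4 m \<and> sum m {..<4} = Suc s"
    then obtain k where k: "k < 4" "m k \<noteq> 0"
      by (metis lessThan_iff sum.neutral nat.simps(3))
    then obtain m' where m: "m = m' + ek k" using split_ek by blast
    have A': "A4 m'" using h k(1) unfolding m by (auto simp: A4_def ek_def)
    have "sum m {..<4} = sum m' {..<4} + 1" unfolding m using k(1) by (simp add: sum.distrib sum_ek)
    then have IH: "D1 (mono m') = D2 (mono m')" using Suc.IH h A' by simp
    have mm: "mono m = smulA (1 / mcoef \<theta> m' (ek k)) (amul \<theta> (mono m') (zgen k))"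
      by (simp add: zgen_mono amul_mono m)
    have L1: "\<forall>a\<in>Alg. \<forall>b\<in>Alg. D1 (amul \<theta> a b) = rmul1 \<theta> (D1 a) b + lmul1 \<theta> a (D1 b)"
      "\<forall>c. \<forall>a\<in>Alg. D1 (smulA c a) = (\<lambda>i. smulA c (D1 a i))" "\<forall>i<4. D1 (zgen i) = dz i"
      using D1 unfolding is_leibniz_d_def by blast+
    have L2: "\<forall>a\<in>Alg. \<forall>b\<in>Alg. D2 (amul \<theta> a b) = rmul1 \<theta> (D2 a) b + lmul1 \<theta> a (D2 b)"
      "\<forall>c. \<forall>a\<in>Alg. D2 (smulA c a) = (\<lambda>i. smulA c (D2 a i))" "\<forall>i<4. D2 (zgen i) = dz i"
      using D2 unfolding is_leibniz_d_def by blast+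
    have Am: "mono m' \<in> Alg" "zgen k \<in> Alg" "amul \<theta> (mono m') (zgen k) \<in> Alg" using A' k(1) by simp_all
    have "D1 (mono m) = (\<lambda>i. smulA (1 / mcoef \<theta> m' (ek k)) ((rmul1 \<theta> (D1 (mono m')) (zgen k) + lmul1 \<theta> (mono m') (dz k)) i))"
      unfolding mm using L1 Am k(1) by simp
    also have "\<dots> = D2 (mono m)"
      unfolding mm IH using L2 Am k(1) by simp
    finally show "D1 (mono m) = D2 (mono m)" .
  qed
qed

lemma leib_agree:
  assumes D1: "is_leibniz_d \<theta> D1" and D2: "is_leibniz_d \<theta> D2" and a: "a \<in> Alg"
  shows "D1 a = D2 a"
  using a
proof (rule Alg_induct[where P = "\<lambda>a. D1 a = D2 a"])
  show "D1 0 = D2 0" using leib_zero[OF D1] leib_zero[OF D2] by simp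
next
  fix x y assume "x \<in> Alg" "y \<in> Alg" "D1 x = D2 x" "D1 y = D2 y"
  then show "D1 (x + y) = D2 (x + y)" using D1 D2 unfolding is_leibniz_d_def by simp
next
  fix c m assume m: "A4 m"
  then have "D1 (mono m) = D2 (mono m)" using leib_agree_mono_aux[OF D1 D2] by blast
  then show "D1 (smulA c (mono m)) = D2 (smulA c (mono m))" using D1 D2 m unfolding is_leibniz_d_def by simp
qed

lemma dA_Dext: "dA \<theta> = Dext \<theta>"
  unfolding dA_def
proof (rule the_equality)
  show "is_leibniz_d \<theta> (Dext \<theta>) \<and> (\<forall>a. a \<notin> Alg \<longrightarrow> Dext \<theta> a = 0)"
    using Dext_leib by (simp add: Dext_def)
next
  fix D assume D: "is_leibniz_d \<theta> D \<and> (\<forall>a. a \<notin> Alg \<longrightarrow> D a = 0)"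
  show "D = Dext \<theta>"
  proof (rule ext)
    fix a show "D a = Dext \<theta> a"
      using D leib_agree[OF _ Dext_leib] by (cases "a \<in> Alg") (auto simp: Dext_def)
  qed
qed

lemma dA_eq: "a \<in> Alg \<Longrightarrow> dA \<theta> a = D0 \<theta> a"
  by (simp add: dA_Dext Dext_def)


lemma Pmat_vals: "Pmat 0 0 = 0" "Pmat 0 1 = 0" "Pmat 0 2 = 1" "Pmat 0 3 = 0"
  "Pmat 1 0 = 0" "Pmat 1 1 = 0" "Pmat 1 2 = 0" "Pmat 1 3 = 1"
  "Pmat 2 0 = 1" "Pmat 2 1 = 0" "Pmat 2 2 = 0" "Pmat 2 3 = 0"
  "Pmat 3 0 = 0" "Pmat 3 1 = 1" "Pmat 3 2 = 0" "Pmat 3 3 = 0"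
  by (simp_all add: Pmat_def)

lemma Pmat_vals': "Pmat 0 (Suc 0) = 0" "Pmat (Suc 0) 0 = 0" "Pmat (Suc 0) (Suc 0) = 0" "Pmat (Suc 0) 2 = 0"
  "Pmat (Suc 0) 3 = 1" "Pmat 2 (Suc 0) = 0" "Pmat 3 (Suc 0) = 1"
  by (simp_all add: Pmat_def)

lemma Rmat_diag: "Rmat \<theta> 0 2 = 1" "Rmat \<theta> 2 0 = 1" "Rmat \<theta> 1 3 = 1" "Rmat \<theta> 3 1 = 1"
  "Rmat \<theta> (Suc 0) 3 = 1" "Rmat \<theta> 3 (Suc 0) = 1"
  by (simp_all add: Rmat_def)

lemma twist_pairs: "twist \<theta> 0 (twist \<theta> 2 f) = f" "twist \<theta> 2 (twist \<theta> 0 f) = f"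
  "twist \<theta> 1 (twist \<theta> 3 f) = f" "twist \<theta> 3 (twist \<theta> 1 f) = f"
  "twist \<theta> (Suc 0) (twist \<theta> 3 f) = f" "twist \<theta> 3 (twist \<theta> (Suc 0) f) = f"
  by (rule twist_pair; simp add: Pmat_vals Pmat_vals')+

lemma amul_if_right[simp]: "amul \<theta> f (if c then g else 0) = (if c then amul \<theta> f g else 0)" by simp
lemma amul_if_left[simp]: "amul \<theta> (if c then g else 0) f = (if c then amul \<theta> g f else 0)" by simp
lemma twist_if[simp]: "twist \<theta> i (if c then g else 0) = (if c then twist \<theta> i g else 0)" by simp
lemma smulA_if[simp]: "smulA a (if c then g else 0) = (if c then smulA a g else 0)" by simp

lemma sum2_delta: "(\<Sum>i<(4::nat). \<Sum>j<(4::nat). if a = i \<and> b = j then C i j else (0::'a::comm_monoid_add))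
   = (if a < 4 \<and> b < 4 then C a b else 0)"
proof -
  have "(\<Sum>j<(4::nat). if a = i \<and> b = j then C i j else (0::'a)) = (if a = i \<and> b < 4 then C i b else 0)" for i
    by (cases "a = i") (simp_all add: sum.delta)
  then have "(\<Sum>i<(4::nat). \<Sum>j<(4::nat). if a = i \<and> b = j then C i j else (0::'a))
     = (\<Sum>i<(4::nat). if a = i then (if b < 4 then C i b else 0) else 0)"
    by (intro sum.cong) auto
  then show ?thesis by (simp add: sum.delta)
qed

lemma sum_fun_apply2: "(\<Sum>i\<in>A. \<Sum>j\<in>B. F i j) a b = (\<Sum>i\<in>A. \<Sum>j\<in>B. F i j a b)"
  by (simp add: sum_fun_apply)

lemma sum1_delta: "(\<Sum>i<(4::nat). if a = i then C i else (0::'a::comm_monoid_add)) = (if a < 4 then C a else 0)"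
  by (simp add: sum.delta)

lemma dz_eq: "dz i = (\<lambda>k. if k = i then oneA else 0)" by (simp add: dz_def)

lemma dz2_eq: "dz2 \<theta> a b = (\<lambda>i j. if i = a \<and> j = b then oneA else 0)"
  by (auto simp: dz2_def tens_def dz_def fun_eq_iff)

lemma Form1_iff: "\<omega> \<in> Form1 \<longleftrightarrow> (\<forall>i<4. \<omega> i \<in> Alg) \<and> (\<forall>i. \<not> i < 4 \<longrightarrow> \<omega> i = 0)"
  by (auto simp: Form1_def not_less)
lemma Form2_iff: "\<tau> \<in> Form2 \<longleftrightarrow> (\<forall>i<4. \<forall>j<4. \<tau> i j \<in> Alg) \<and> (\<forall>i j. \<not> (i < 4 \<and> j < 4) \<longrightarrow> \<tau> i j = 0)"
  by (auto simp: Form2_def not_less)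

lemma Form1_Alg: "\<omega> \<in> Form1 \<Longrightarrow> \<omega> i \<in> Alg"
  by (cases "i < 4") (auto simp: Form1_iff)
lemma Form2_Alg: "\<tau> \<in> Form2 \<Longrightarrow> \<tau> i j \<in> Alg"
  by (cases "i < 4 \<and> j < 4") (auto simp: Form2_iff)
lemma Form1_out: "\<omega> \<in> Form1 \<Longrightarrow> \<not> i < 4 \<Longrightarrow> \<omega> i = 0"
  by (auto simp: Form1_iff)
lemma Form2_out: "\<tau> \<in> Form2 \<Longrightarrow> \<not> (i < 4 \<and> j < 4) \<Longrightarrow> \<tau> i j = 0"
  by (auto simp: Form2_iff)

lemma gmap_inner: "(\<Sum>i<4. \<Sum>j<4. lmul2 \<theta> (cA (Pmat i j / 2)) (dz2 \<theta> i j))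
    = (\<lambda>a b. if a < 4 \<and> b < 4 then cA (Pmat a b / 2) else 0)"
proof (rule ext, rule ext)
  fix a b
  have "(\<Sum>i<4. \<Sum>j<4. lmul2 \<theta> (cA (Pmat i j / 2)) (dz2 \<theta> i j)) a b
      = (\<Sum>i<(4::nat). \<Sum>j<(4::nat). if a = i \<and> b = j then cA (Pmat i j / 2) else 0)"
    by (subst sum_fun_apply2) (intro sum.cong refl, auto simp: lmul2_def dz2_eq cA_def)
  also have "\<dots> = (if a < 4 \<and> b < 4 then cA (Pmat a b / 2) else 0)"
    by (rule sum2_delta)
  finally show "(\<Sum>i<4. \<Sum>j<4. lmul2 \<theta> (cA (Pmat i j / 2)) (dz2 \<theta> i j)) a b
      = (if a < 4 \<and> b < 4 then cA (Pmat a b / 2) else 0)" .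
qed

lemma gmap_eq: "gmap \<theta> x = (\<lambda>i j. if i < 4 \<and> j < 4 then smulA (Pmat i j / 2) x else 0)"
  unfolding gmap_def gmap_inner by (simp add: lmul2_def cong: if_cong)

lemma ginvC_eq: "ginvC \<theta> \<tau> = smulA 2 (\<tau> 0 2 + \<tau> 1 3 + \<tau> 2 0 + \<tau> 3 1)"
  by (simp add: ginvC_def sum4 sumlt Pmat_vals Pmat_vals' smulA_add)


lemma sum_fun_apply1b: "(\<Sum>i\<in>A. F i) a b = (\<Sum>i\<in>A. F i a b)"
  by (simp add: sum_fun_apply)
lemma sum_fun_apply1c: "(\<Sum>i\<in>A. F i) a b c = (\<Sum>i\<in>A. F i a b c)"
  by (simp add: sum_fun_apply)
lemma sum_fun_apply2a: "(\<Sum>i\<in>A. \<Sum>j\<in>B. F i j) k = (\<Sum>i\<in>A. \<Sum>j\<in>B. F i j k)"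
  by (simp add: sum_fun_apply)
lemma sum_fun_apply3: "(\<Sum>i\<in>A. \<Sum>j\<in>B. \<Sum>k\<in>C. F i j k) a = (\<Sum>i\<in>A. \<Sum>j\<in>B. \<Sum>k\<in>C. F i j k a)"
  by (simp add: sum_fun_apply)

lemma sigmaC_eq: "sigmaC \<theta> \<tau> = (\<lambda>a b. if a < 4 \<and> b < 4 then smulA (Rmat \<theta> a b) (\<tau> b a) else 0)"
proof (rule ext, rule ext)
  fix a b
  have "sigmaC \<theta> \<tau> a b = (\<Sum>i<(4::nat). \<Sum>j<(4::nat). if b = i \<and> a = j then smulA (Rmat \<theta> j i) (\<tau> i j) else 0)"
    unfolding sigmaC_def by (subst sum_fun_apply2) (intro sum.cong refl, auto simp: lmul2_def dz2_eq)
  also have "\<dots> = (if a < 4 \<and> b < 4 then smulA (Rmat \<theta> a b) (\<tau> b a) else 0)"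
    by (subst sum2_delta) auto
  finally show "sigmaC \<theta> \<tau> a b = (if a < 4 \<and> b < 4 then smulA (Rmat \<theta> a b) (\<tau> b a) else 0)" .
qed

lemma nablaC_eq: "nablaC \<theta> \<omega> = (\<lambda>a b. if b < 4 then dA \<theta> (\<omega> b) a else 0)"
proof (rule ext, rule ext)
  fix a b
  have "nablaC \<theta> \<omega> a b = (\<Sum>i<(4::nat). if b = i then dA \<theta> (\<omega> i) a else 0)"
    unfolding nablaC_def by (subst sum_fun_apply1b) (intro sum.cong refl, auto simp: tens_def dz_def)
  also have "\<dots> = (if b < 4 then dA \<theta> (\<omega> b) a else 0)"
    by (rule sum1_delta)
  finally show "nablaC \<theta> \<omega> a b = (if b < 4 then dA \<theta> (\<omega> b) a else 0)" .
qed

lemma ginvC_dz2: "j < 4 \<Longrightarrow> k < 4 \<Longrightarrow> ginvC \<theta> (dz2 \<theta> j k) = cA (2 * Pmat j k)"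
  by (rule ext, drule less4, drule less4, elim disjE)
     (simp_all add: ginvC_eq dz2_eq cA_def Pmat_vals Pmat_vals' oneA_def)

lemma idg_term: "j < 4 \<Longrightarrow> k < 4 \<Longrightarrow>
    lmul1 \<theta> X (rmul1 \<theta> (dz i) (ginvC \<theta> (dz2 \<theta> j k))) = (\<lambda>l. if l = i then smulA (2 * Pmat j k) X else 0)"
  by (rule ext) (simp add: ginvC_dz2 lmul1_def rmul1_def dz_def)

lemma id_ginv_eq: "id_ginv \<theta> (ginvC \<theta>) T = (\<lambda>l. if l < 4 then ginvC \<theta> (T l) else 0)"
proof (rule ext)
  fix l
  have "id_ginv \<theta> (ginvC \<theta>) T l = (\<Sum>i<(4::nat). \<Sum>j<(4::nat). \<Sum>k<(4::nat). if l = i then smulA (2 * Pmat j k) (T i j k) else 0)"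
    unfolding id_ginv_def by (subst sum_fun_apply3) (intro sum.cong refl, simp add: idg_term)
  also have "\<dots> = (\<Sum>i<(4::nat). if l = i then (\<Sum>j<(4::nat). \<Sum>k<(4::nat). smulA (2 * Pmat j k) (T i j k)) else 0)"
    by (intro sum.cong refl) auto
  also have "\<dots> = (if l < 4 then ginvC \<theta> (T l) else 0)"
    by (simp add: sum1_delta ginvC_def)
  finally show "id_ginv \<theta> (ginvC \<theta>) T l = (if l < 4 then ginvC \<theta> (T l) else 0)" .
qed

lemma D0_twist: "k < 4 \<Longrightarrow> l < 4 \<Longrightarrow> D0 \<theta> (twist \<theta> l a) k = smulA (Rmat \<theta> k l) (twist \<theta> l (D0 \<theta> a k))"
  by (rule ext) (simp add: D0_def twist_lam I3)

lemma R1: "a \<in> Alg \<Longrightarrow> gmap \<theta> a \<in> Form2"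
  by (simp add: gmap_eq Form2_iff)
lemma R2: "gmap \<theta> (a + b) = gmap \<theta> a + gmap \<theta> b"
  by (rule ext, rule ext) (simp add: gmap_eq smulA_add)
lemma R3: "gmap \<theta> (amul \<theta> a b) = lmul2 \<theta> a (gmap \<theta> b)"
  by (rule ext, rule ext) (simp add: gmap_eq lmul2_def)
lemma R4: "gmap \<theta> (amul \<theta> a b) = rmul2 \<theta> (gmap \<theta> a) b"
proof (rule ext, rule ext)
  fix i j
  show "gmap \<theta> (amul \<theta> a b) i j = rmul2 \<theta> (gmap \<theta> a) b i j"
  proof (cases "i < 4 \<and> j < 4 \<and> Pmat i j \<noteq> 0")
    case True
    then show ?thesis by (simp add: gmap_eq rmul2_def twist_pair)
  next
    case False
    then show ?thesis by (auto simp: gmap_eq rmul2_def)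
  qed
qed

lemma R5: "\<tau> \<in> Form2 \<Longrightarrow> ginvC \<theta> \<tau> \<in> Alg"
  by (simp add: ginvC_eq Form2_Alg)
lemma R6: "ginvC \<theta> (\<tau> + \<upsilon>) = ginvC \<theta> \<tau> + ginvC \<theta> \<upsilon>"
  by (rule ext) (simp add: ginvC_eq algebra_simps)
lemma R7: "a \<in> Alg \<Longrightarrow> \<tau> \<in> Form2 \<Longrightarrow> ginvC \<theta> (lmul2 \<theta> a \<tau>) = amul \<theta> a (ginvC \<theta> \<tau>)"
  by (simp add: ginvC_eq lmul2_def Form2_Alg amul_add_right smulA_add)
lemma R8: "a \<in> Alg \<Longrightarrow> \<tau> \<in> Form2 \<Longrightarrow> ginvC \<theta> (rmul2 \<theta> \<tau> a) = amul \<theta> (ginvC \<theta> \<tau>) a"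
  by (simp add: ginvC_eq rmul2_def Form2_Alg amul_add_left smulA_add twist_pairs)
lemma R19: "ginvC \<theta> (sigmaC \<theta> \<tau>) = ginvC \<theta> \<tau>"
  by (simp add: ginvC_eq sigmaC_eq Rmat_diag ac_simps)


definition partner :: "nat \<Rightarrow> nat" where
  "partner i = (if i = 0 then 2 else if i = 1 then 3 else if i = 2 then 0 else 1)"

lemma gmap_one: "i < 4 \<Longrightarrow> j < 4 \<Longrightarrow> gmap \<theta> oneA i j = cA (Pmat i j / 2)"
  by (simp add: gmap_eq cA_def)

lemma lmul1_dz: "lmul1 \<theta> X (dz j) k = (if k = j then X else 0)"
  by (simp add: lmul1_def dz_def)
lemma rmul1_lmul1_dz: "rmul1 \<theta> (lmul1 \<theta> c (dz i)) Y k = (if k = i then amul \<theta> c (twist \<theta> i Y) else 0)"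
  by (simp add: lmul1_def rmul1_def dz_def)

lemma R9_G: "i < 4 \<Longrightarrow> j < 4 \<Longrightarrow>
  ginvC \<theta> (tens \<theta> \<omega> (lmul1 \<theta> (gmap \<theta> oneA i j) (dz i))) = smulA (Pmat i j) (\<omega> (partner i))"
  by (rule ext, drule less4, elim disjE)
     (simp_all add: gmap_one ginvC_eq tens_def lmul1_def dz_def partner_def)

lemma R9: "\<omega> \<in> Form1 \<Longrightarrow> (\<Sum>i<4. \<Sum>j<4.
        lmul1 \<theta> (ginvC \<theta> (tens \<theta> \<omega> (lmul1 \<theta> (gmap \<theta> oneA i j) (dz i)))) (dz j)) = \<omega>"
proof (rule ext)
  fix k assume w: "\<omega> \<in> Form1"
  have "(\<Sum>i<4. \<Sum>j<4. lmul1 \<theta> (ginvC \<theta> (tens \<theta> \<omega> (lmul1 \<theta> (gmap \<theta> oneA i j) (dz i)))) (dz j)) k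
     = (\<Sum>i<(4::nat). \<Sum>j<(4::nat). if k = j then smulA (Pmat i j) (\<omega> (partner i)) else 0)"
    by (subst sum_fun_apply2a) (intro sum.cong refl, simp add: lmul1_dz R9_G)
  also have "\<dots> = (if k < 4 then (\<Sum>i<(4::nat). smulA (Pmat i k) (\<omega> (partner i))) else 0)"
    by (simp add: sum1_delta)
  also have "\<dots> = \<omega> k"
  proof (cases "k < 4")
    case True
    then show ?thesis
      by (drule_tac less4, elim disjE)
         (simp_all add: sum4 Pmat_vals Pmat_vals' partner_def)
  qed (simp add: Form1_out[OF w])
  finally show "(\<Sum>i<4. \<Sum>j<4. lmul1 \<theta> (ginvC \<theta> (tens \<theta> \<omega> (lmul1 \<theta> (gmap \<theta> oneA i j) (dz i)))) (dz j)) k = \<omega> k" .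
qed

lemma R10_Y: "j < 4 \<Longrightarrow> ginvC \<theta> (tens \<theta> (dz j) \<omega>) = smulA 2 (twist \<theta> j (\<omega> (partner j)))"
  by (drule less4, elim disjE) (simp_all add: ginvC_eq tens_def dz_def partner_def)

lemma R10: "\<omega> \<in> Form1 \<Longrightarrow> (\<Sum>i<4. \<Sum>j<4.
        rmul1 \<theta> (lmul1 \<theta> (gmap \<theta> oneA i j) (dz i)) (ginvC \<theta> (tens \<theta> (dz j) \<omega>))) = \<omega>"
proof (rule ext)
  fix k assume w: "\<omega> \<in> Form1"
  have "(\<Sum>i<4. \<Sum>j<4. rmul1 \<theta> (lmul1 \<theta> (gmap \<theta> oneA i j) (dz i)) (ginvC \<theta> (tens \<theta> (dz j) \<omega>))) k
     = (\<Sum>i<(4::nat). if k = i then (\<Sum>j<(4::nat). smulA (Pmat i j / 2) (twist \<theta> i (smulA 2 (twist \<theta> j (\<omega> (partner j)))))) else 0)"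
    by (subst sum_fun_apply2a) (intro sum.cong refl, simp add: rmul1_lmul1_dz R10_Y gmap_one)
  also have "\<dots> = (if k < 4 then (\<Sum>j<(4::nat). smulA (Pmat k j / 2) (twist \<theta> k (smulA 2 (twist \<theta> j (\<omega> (partner j)))))) else 0)"
    by (simp add: sum1_delta)
  also have "\<dots> = \<omega> k"
  proof (cases "k < 4")
    case True
    then show ?thesis
      by (drule_tac less4, elim disjE)
         (simp_all add: sum4 Pmat_vals Pmat_vals' partner_def twist_pairs)
  qed (simp add: Form1_out[OF w])
  finally show "(\<Sum>i<4. \<Sum>j<4. rmul1 \<theta> (lmul1 \<theta> (gmap \<theta> oneA i j) (dz i)) (ginvC \<theta> (tens \<theta> (dz j) \<omega>))) k = \<omega> k" .
qed

definition sinv :: "real \<Rightarrow> form2 \<Rightarrow> form2" where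
  "sinv \<theta> \<tau> = (\<lambda>a b. if a < 4 \<and> b < 4 then smulA (Rmat \<theta> a b) (\<tau> b a) else 0)"

lemma R11: "bij_betw (sigmaC \<theta>) Form2 Form2"
proof (rule bij_betw_byWitness[where f' = "sinv \<theta>"])
  show "\<forall>a\<in>Form2. sinv \<theta> (sigmaC \<theta> a) = a"
  proof
    fix \<tau> :: form2 assume t: "\<tau> \<in> Form2"
    show "sinv \<theta> (sigmaC \<theta> \<tau>) = \<tau>"
      by (rule ext, rule ext) (use t in \<open>auto simp: sinv_def sigmaC_eq Rmat_inv Form2_out\<close>)
  qed
  show "\<forall>a'\<in>Form2. sigmaC \<theta> (sinv \<theta> a') = a'"
  proof
    fix \<tau> :: form2 assume t: "\<tau> \<in> Form2"
    show "sigmaC \<theta> (sinv \<theta> \<tau>) = \<tau>"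
      by (rule ext, rule ext) (use t in \<open>auto simp: sinv_def sigmaC_eq Rmat_inv Form2_out\<close>)
  qed
  show "sigmaC \<theta> ` Form2 \<subseteq> Form2"
    by (auto simp: sigmaC_eq Form2_iff)
  show "sinv \<theta> ` Form2 \<subseteq> Form2"
    by (auto simp: sinv_def Form2_iff)
qed

lemma R12: "sigmaC \<theta> (\<tau> + \<upsilon>) = sigmaC \<theta> \<tau> + sigmaC \<theta> \<upsilon>"
  by (rule ext, rule ext) (simp add: sigmaC_eq smulA_add)
lemma R13: "sigmaC \<theta> (lmul2 \<theta> a \<tau>) = lmul2 \<theta> a (sigmaC \<theta> \<tau>)"
  by (rule ext, rule ext) (simp add: sigmaC_eq lmul2_def)
lemma R14: "sigmaC \<theta> (rmul2 \<theta> \<tau> a) = rmul2 \<theta> (sigmaC \<theta> \<tau>) a"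
  by (rule ext, rule ext) (simp add: sigmaC_eq rmul2_def twist_comm)

lemma R15: "\<omega> \<in> Form1 \<Longrightarrow> nablaC \<theta> \<omega> \<in> Form2"
  by (auto simp: nablaC_eq Form2_iff dA_eq Form1_Alg)

lemma R16: "\<omega> \<in> Form1 \<Longrightarrow> \<zeta> \<in> Form1 \<Longrightarrow> nablaC \<theta> (\<omega> + \<zeta>) = nablaC \<theta> \<omega> + nablaC \<theta> \<zeta>"
  by (rule ext, rule ext) (simp add: nablaC_eq dA_eq Form1_Alg)

lemma R17: "a \<in> Alg \<Longrightarrow> \<omega> \<in> Form1 \<Longrightarrow>
   nablaC \<theta> (lmul1 \<theta> a \<omega>) = lmul2 \<theta> a (nablaC \<theta> \<omega>) + tens \<theta> (dA \<theta> a) \<omega>"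
proof (rule ext, rule ext)
  fix i j assume a: "a \<in> Alg" and w: "\<omega> \<in> Form1"
  show "nablaC \<theta> (lmul1 \<theta> a \<omega>) i j = (lmul2 \<theta> a (nablaC \<theta> \<omega>) + tens \<theta> (dA \<theta> a) \<omega>) i j"
  proof (cases "i < 4 \<and> j < 4")
    case True
    then show ?thesis using a w
      by (simp add: nablaC_eq lmul1_def lmul2_def tens_def dA_eq Form1_Alg D0_leib_k add.commute)
  next
    case False
    then show ?thesis using a w
      by (auto simp: nablaC_eq lmul1_def lmul2_def tens_def dA_eq Form1_Alg Form1_out fun_contract)
  qed
qed

lemma R18: "a \<in> Alg \<Longrightarrow> \<omega> \<in> Form1 \<Longrightarrow>
   nablaC \<theta> (rmul1 \<theta> \<omega> a) = rmul2 \<theta> (nablaC \<theta> \<omega>) a + sigmaC \<theta> (tens \<theta> \<omega> (dA \<theta> a))"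
proof (rule ext, rule ext)
  fix i j assume a: "a \<in> Alg" and w: "\<omega> \<in> Form1"
  show "nablaC \<theta> (rmul1 \<theta> \<omega> a) i j = (rmul2 \<theta> (nablaC \<theta> \<omega>) a + sigmaC \<theta> (tens \<theta> \<omega> (dA \<theta> a))) i j"
  proof (cases "i < 4 \<and> j < 4")
    case True
    then show ?thesis using a w
      by (simp add: nablaC_eq rmul1_def rmul2_def sigmaC_eq tens_def dA_eq Form1_Alg D0_leib_k D0_twist)
  next
    case False
    then show ?thesis using a w
      by (auto simp: nablaC_eq rmul1_def rmul2_def sigmaC_eq tens_def dA_eq Form1_Alg Form1_out fun_contract)
  qed
qed


lemma tens12_N: "j < 4 \<Longrightarrow> tens12 \<theta> (nablaC \<theta> \<omega>) \<zeta> l j k = amul \<theta> (dA \<theta> (\<omega> j) l) (twist \<theta> l (twist \<theta> j (\<zeta> k)))"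
  by (simp add: tens12_def nablaC_eq)

lemma sigid_eq:
  assumes "l < 4" "j < 4" "k < 4"
  shows "sigma_id \<theta> (sigmaC \<theta>) (tens21 \<theta> \<omega> (nablaC \<theta> \<zeta>)) l j k
    = smulA (Rmat \<theta> l j) (amul \<theta> (\<omega> j) (twist \<theta> j (dA \<theta> (\<zeta> k) l)))"
proof -
  have "sigma_id \<theta> (sigmaC \<theta>) (tens21 \<theta> \<omega> (nablaC \<theta> \<zeta>)) l j k
     = (\<Sum>k'<(4::nat). if k = k' then sigmaC \<theta> (\<lambda>i j. if i < 4 \<and> j < 4 then tens21 \<theta> \<omega> (nablaC \<theta> \<zeta>) i j k' else 0) l j else 0)"
    unfolding sigma_id_def by (subst sum_fun_apply1c) (intro sum.cong refl, simp add: tens12_def dz_def)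
  also have "\<dots> = (if k < 4 then sigmaC \<theta> (\<lambda>i j. if i < 4 \<and> j < 4 then tens21 \<theta> \<omega> (nablaC \<theta> \<zeta>) i j k else 0) l j else 0)"
    by (rule sum1_delta)
  also have "\<dots> = smulA (Rmat \<theta> l j) (amul \<theta> (\<omega> j) (twist \<theta> j (dA \<theta> (\<zeta> k) l)))"
    using assms by (simp add: sigmaC_eq tens21_def nablaC_eq)
  finally show ?thesis .
qed

lemma R20:
  assumes w: "\<omega> \<in> Form1" and z: "\<zeta> \<in> Form1"
  shows "id_ginv \<theta> (ginvC \<theta>) (tens12 \<theta> (nablaC \<theta> \<omega>) \<zeta> + sigma_id \<theta> (sigmaC \<theta>) (tens21 \<theta> \<omega> (nablaC \<theta> \<zeta>)))
         = dA \<theta> (ginvC \<theta> (tens \<theta> \<omega> \<zeta>))"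
proof (rule ext)
  fix l
  have A: "ginvC \<theta> (tens \<theta> \<omega> \<zeta>) \<in> Alg"
    using w z by (simp add: ginvC_eq tens_def Form1_Alg)
  show "id_ginv \<theta> (ginvC \<theta>) (tens12 \<theta> (nablaC \<theta> \<omega>) \<zeta> + sigma_id \<theta> (sigmaC \<theta>) (tens21 \<theta> \<omega> (nablaC \<theta> \<zeta>))) l
         = dA \<theta> (ginvC \<theta> (tens \<theta> \<omega> \<zeta>)) l"
  proof (cases "l < 4")
    case True
    then show ?thesis
      using w z A
      by (simp add: id_ginv_eq ginvC_eq tens12_N sigid_eq dA_eq tens_def Form1_Alg D0_leib_k D0_twist
          smulA_add add_ac)
  next
    case False
    then show ?thesis using A by (simp add: id_ginv_eq dA_eq)
  qed
qed

theorem proposition4p4: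
  fixes \<theta> :: real
  shows "riemannian_structure \<theta> (gmap \<theta>) (ginvC \<theta>) (nablaC \<theta>) (sigmaC \<theta>)"
  unfolding riemannian_structure_def
  apply (intro conjI)
  subgoal by (simp add: R1)
  subgoal by (simp add: R2)
  subgoal by (simp add: R3)
  subgoal by (simp add: R4)
  subgoal by (simp add: R5)
  subgoal by (simp add: R6)
  subgoal by (simp add: R7)
  subgoal by (simp add: R8)
  subgoal by (simp add: R9)
  subgoal by (simp add: R10)
  subgoal by (rule R11)
  subgoal by (simp add: R12)
  subgoal by (simp add: R13)
  subgoal by (simp add: R14)
  subgoal by (simp add: R15)
  subgoal by (simp add: R16)
  subgoal by (simp add: R17)
  subgoal by (simp add: R18)
  subgoal by (simp add: R19)
  subgoal by (simp add: R20)
  done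

end
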